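(* Let $\mathcal{D}$ be a domain with $\mathcal{SP}\subseteq\mathcal{D}\subseteq\mathcal{U}$. If there is an own-peak-only rule on $\mathcal{E}_{\mathcal{D}}$ that satisfies efficiency, the equal division guarantee, and not obvious manipulability (NOM), then $\mathcal{D}\subseteq\mathcal{C}$.
   Context: Let $N=\{1,\dots,n\}$ be a finite set of agents. $\mathcal{U}$ is the set of continuous complete preorders $R_i$ on $\mathbb{R}_+\cup\{\infty\}$ ($P_i$ strict, $I_i$ indifference), with peak $p(R_i)=\{x:xR_iy\ \forall y\}$, $\underline{p}(R_i)=\inf p(R_i)$, $\overline{p}(R_i)=\sup p(R_i)$. $R_i$ is single-peaked if $p(R_i)$ is a singleton and for $x,x'\in\mathbb{R}_+$, $xP_ix'$ whenever $x'<x\le p(R_i)$ or $p(R_i)\le x<x'$ ($\mathcal{SP}$ = set of these). $R_i$ is convex if $p(R_i)=[\underline{p}(R_i),\overline{p}(R_i)]$ and for $x,x'\in\mathbb{R}_+$, $xR_ix'$ whenever $x'<x\le\underline{p}(R_i)$ or $\overline{p}(R_i)\le x<x'$ ($\mathcal{C}$ = set of these). For $\mathcal{D}\subseteq\mathcal{U}$, an economy is $(R,\Omega)$, $R\in\mathcal{D}^n$, $\Omega>0$; $\mathcal{E}_{\mathcal{D}}$ is the set of economies; a rule is a map $\varphi:\mathcal{E}_{\mathcal{D}}\to\mathbb{R}^n_+$ with $\sum_j\varphi_j(R,\Omega)=\Omega$. Efficiency: no $x\in\mathbb{R}^n_+$ with $\sum_jx_j=\Omega$ has $x_iR_i\varphi_i(R,\Omega)$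 for all $i$ and $x_iP_i\varphi_i(R,\Omega)$ for some $i$. Own-peak-only: for $R_i'\in\mathcal{D}$ with $p(R_i')=p(R_i)$, $\varphi_i(R,\Omega)=\varphi_i(R_i',R_{-i},\Omega)$. Equal division guarantee: $\Omega/n\in p(R_i)$ implies $\varphi_i(R,\Omega)I_i\Omega/n$. Option set $O^\varphi(R_i,\Omega)=\{\varphi_i(R_i,R_{-i},\Omega):R_{-i}\in\mathcal{D}^{n-1}\}$; $R_i'\in\mathcal{D}$ is a manipulation at $(R_i,\Omega)$ if $\varphi_i(R_i',R_{-i},\Omega)P_i\varphi_i(R_i,R_{-i},\Omega)$ for some $R_{-i}$, an obvious manipulation if moreover each $x'\in O^\varphi(R_i',\Omega)$ satisfies $x'P_ix$ for some $x\in O^\varphi(R_i,\Omega)$; NOM means no obvious manipulation exists. *)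

theory Defs
  imports "HOL-Analysis.Analysis" "HOL-Library.Extended_Nonnegative_Real"
begin

text \<open>Consumption space R+ \<union> {\<infinity>} is modelled by ennreal (order topology = [0,\<infinity>]).
  A preference is a binary relation R x y meaning x R y (x weakly preferred to y).\<close>

type_synonym pref = "ennreal \<Rightarrow> ennreal \<Rightarrow> bool"

definition strict :: "pref \<Rightarrow> ennreal \<Rightarrow> ennreal \<Rightarrow> bool" where
  "strict R x y \<longleftrightarrow> R x y \<and> \<not> R y x"

definition indiff :: "pref \<Rightarrow> ennreal \<Rightarrow> ennreal \<Rightarrow> bool" where
  "indiff R x y \<longleftrightarrow> R x y \<and> R y x"

definition complete_preorder :: "pref \<Rightarrow> bool" where
  "complete_preorder R \<longleftrightarrow> (\<forall>x. R x x) \<and> (\<forall>x y z. R x y \<longrightarrow> R y z \<longrightarrow> R x z)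
      \<and> (\<forall>x y. R x y \<or> R y x)"

definition continuous_pref :: "pref \<Rightarrow> bool" where
  "continuous_pref R \<longleftrightarrow> (\<forall>x. closed {y. R y x} \<and> closed {y. R x y})"

definition U_dom :: "pref set" where
  "U_dom = {R. complete_preorder R \<and> continuous_pref R}"

definition peak :: "pref \<Rightarrow> ennreal set" where
  "peak R = {x. \<forall>y. R x y}"

definition SP_dom :: "pref set" where
  "SP_dom = {R \<in> U_dom. \<exists>p. peak R = {p} \<and>
      (\<forall>x x'. x \<noteq> \<infinity> \<and> x' \<noteq> \<infinity> \<and> ((x' < x \<and> x \<le> p) \<or> (p \<le> x \<and> x < x'))
          \<longrightarrow> strict R x x')}"

definition C_dom :: "pref set" where
  "C_dom = {R \<in> U_dom. peak R = {Inf (peak R) .. Sup (peak R)} \<and>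
      (\<forall>x x'. x \<noteq> \<infinity> \<and> x' \<noteq> \<infinity> \<and>
          ((x' < x \<and> x \<le> Inf (peak R)) \<or> (Sup (peak R) \<le> x \<and> x < x'))
          \<longrightarrow> R x x')}"

definition profiles :: "pref set \<Rightarrow> nat \<Rightarrow> (nat \<Rightarrow> pref) set" where
  "profiles D n = PiE {..<n} (\<lambda>_. D)"

type_synonym rule = "(nat \<Rightarrow> pref) \<Rightarrow> real \<Rightarrow> nat \<Rightarrow> real"

definition is_rule :: "pref set \<Rightarrow> nat \<Rightarrow> rule \<Rightarrow> bool" where
  "is_rule D n \<phi> \<longleftrightarrow> (\<forall>R \<in> profiles D n. \<forall>\<Omega>>0.
      (\<forall>i<n. 0 \<le> \<phi> R \<Omega> i) \<and> (\<Sum>i<n. \<phi> R \<Omega> i) = \<Omega>)"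

definition efficient :: "pref set \<Rightarrow> nat \<Rightarrow> rule \<Rightarrow> bool" where
  "efficient D n \<phi> \<longleftrightarrow> (\<forall>R \<in> profiles D n. \<forall>\<Omega>>0.
      \<not> (\<exists>x::nat \<Rightarrow> real. (\<forall>i<n. 0 \<le> x i) \<and> (\<Sum>i<n. x i) = \<Omega>
          \<and> (\<forall>i<n. R i (ennreal (x i)) (ennreal (\<phi> R \<Omega> i)))
          \<and> (\<exists>i<n. strict (R i) (ennreal (x i)) (ennreal (\<phi> R \<Omega> i)))))"

definition own_peak_only :: "pref set \<Rightarrow> nat \<Rightarrow> rule \<Rightarrow> bool" where
  "own_peak_only D n \<phi> \<longleftrightarrow> (\<forall>R \<in> profiles D n. \<forall>\<Omega>>0. \<forall>i<n. \<forall>R' \<in> D.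
      peak R' = peak (R i) \<longrightarrow> \<phi> R \<Omega> i = \<phi> (R(i := R')) \<Omega> i)"

definition equal_division_guarantee :: "pref set \<Rightarrow> nat \<Rightarrow> rule \<Rightarrow> bool" where
  "equal_division_guarantee D n \<phi> \<longleftrightarrow> (\<forall>R \<in> profiles D n. \<forall>\<Omega>>0. \<forall>i<n.
      ennreal (\<Omega> / real n) \<in> peak (R i) \<longrightarrow>
      indiff (R i) (ennreal (\<phi> R \<Omega> i)) (ennreal (\<Omega> / real n)))"

definition option_set :: "pref set \<Rightarrow> nat \<Rightarrow> rule \<Rightarrow> nat \<Rightarrow> pref \<Rightarrow> real \<Rightarrow> real set" where
  "option_set D n \<phi> i Ri \<Omega> = {\<phi> R \<Omega> i | R. R \<in> profiles D n \<and> R i = Ri}"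

definition manipulation :: "pref set \<Rightarrow> nat \<Rightarrow> rule \<Rightarrow> nat \<Rightarrow> pref \<Rightarrow> real \<Rightarrow> pref \<Rightarrow> bool" where
  "manipulation D n \<phi> i Ri \<Omega> Ri' \<longleftrightarrow> Ri' \<in> D \<and>
     (\<exists>R \<in> profiles D n. R i = Ri \<and>
        strict Ri (ennreal (\<phi> (R(i := Ri')) \<Omega> i)) (ennreal (\<phi> R \<Omega> i)))"

definition obvious_manipulation :: "pref set \<Rightarrow> nat \<Rightarrow> rule \<Rightarrow> nat \<Rightarrow> pref \<Rightarrow> real \<Rightarrow> pref \<Rightarrow> bool" where
  "obvious_manipulation D n \<phi> i Ri \<Omega> Ri' \<longleftrightarrow> manipulation D n \<phi> i Ri \<Omega> Ri' \<and>
     (\<forall>x' \<in> option_set D n \<phi> i Ri' \<Omega>. \<exists>x \<in> option_set D n \<phi> i Ri \<Omega>.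
        strict Ri (ennreal x') (ennreal x))"

definition NOM :: "pref set \<Rightarrow> nat \<Rightarrow> rule \<Rightarrow> bool" where
  "NOM D n \<phi> \<longleftrightarrow> (\<forall>i<n. \<forall>Ri \<in> D. \<forall>\<Omega>>0. \<forall>Ri'.
      \<not> obvious_manipulation D n \<phi> i Ri \<Omega> Ri')"

end

theory Submission
  imports Defs
begin

definition gg :: "ennreal \<Rightarrow> real" where
  "gg x = enn2real (inverse (1 + x))"

lemma gg_cont: "continuous_on UNIV gg"
  unfolding continuous_on_def gg_def
proof (intro ballI)
  fix x :: ennreal
  have c: "continuous_on UNIV (\<lambda>x::ennreal. inverse (1 + x))"
    by (intro continuous_intros)
  have "((\<lambda>x. inverse (1 + x)) \<longlongrightarrow> inverse (1 + x)) (at x within UNIV)"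
    using c unfolding continuous_on_def by auto
  moreover have "inverse (1 + x) \<noteq> top"
    by simp
  then have "inverse (1 + x) = ennreal (enn2real (inverse (1 + x)))"
    by (simp add: ennreal_enn2real_if)
  ultimately show "((\<lambda>x. enn2real (inverse (1 + x))) \<longlongrightarrow> enn2real (inverse (1 + x))) (at x within UNIV)"
    by (metis enn2real_nonneg tendsto_enn2real)
qed

lemma gg_real: "0 \<le> r \<Longrightarrow> gg (ennreal r) = 1 / (1 + r)"
proof -
  assume r: "0 \<le> r"
  have e: "1 + ennreal r = ennreal (1 + r)" using r by (simp add: ennreal_plus[symmetric])
  have "inverse (1 + ennreal r) = ennreal (inverse (1 + r))"
    unfolding e by (rule inverse_ennreal) (use r in simp)
  then show ?thesis using r unfolding gg_def by (simp add: divide_inverse)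
qed

lemma gg_top: "gg top = 0"
  unfolding gg_def by simp

lemma gg_strict: "x < y \<Longrightarrow> gg y < gg x"
proof -
  assume xy: "x < y"
  then have "x \<noteq> top" by auto
  then obtain r where r: "x = ennreal r" "0 \<le> r" by (cases x) auto
  show ?thesis
  proof (cases "y = top")
    case True
    then show ?thesis using r by (simp add: gg_top gg_real)
  next
    case False
    then obtain s where s: "y = ennreal s" "0 \<le> s" by (cases y) auto
    have "r < s" using xy r s by (simp add: ennreal_less_iff)
    then show ?thesis using r s by (simp add: gg_real frac_less2)
  qed
qed

lemma gg_mono: "x \<le> y \<Longrightarrow> gg y \<le> gg x"
  using gg_strict by (cases "x = y") (auto simp: order_le_less)

definition cut :: "real \<Rightarrow> ennreal \<Rightarrow> real" where
  "cut q x = enn2real (min x (ennreal q))"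

lemma cut_cont: "continuous_on UNIV (cut q)"
  unfolding continuous_on_def cut_def
proof (intro ballI)
  fix x :: ennreal
  have c: "continuous_on UNIV (\<lambda>x::ennreal. min x (ennreal q))"
    by (intro continuous_intros)
  have "((\<lambda>x. min x (ennreal q)) \<longlongrightarrow> min x (ennreal q)) (at x within UNIV)"
    using c unfolding continuous_on_def by auto
  moreover have "min x (ennreal q) \<le> ennreal q" by simp
  then have "min x (ennreal q) \<noteq> top"
    by (metis ennreal_neq_top top_unique)
  then have "min x (ennreal q) = ennreal (enn2real (min x (ennreal q)))"
    by (simp add: ennreal_enn2real_if)
  ultimately show "((\<lambda>x. enn2real (min x (ennreal q))) \<longlongrightarrow> enn2real (min x (ennreal q))) (at x within UNIV)"
    by (metis enn2real_nonneg tendsto_enn2real)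
qed

definition vv :: "real \<Rightarrow> real \<Rightarrow> ennreal \<Rightarrow> real" where
  "vv q K x = min (cut q x - q) (K * (gg x - gg (ennreal q)))"

lemma vv_cont: "continuous_on UNIV (vv q K)"
  unfolding vv_def using cut_cont gg_cont by (intro continuous_intros) auto

lemma vv_left: "0 \<le> q \<Longrightarrow> 0 < K \<Longrightarrow> 0 \<le> r \<Longrightarrow> r \<le> q \<Longrightarrow> vv q K (ennreal r) = r - q"
proof -
  assume q: "0 \<le> q" and K: "0 < K" and r: "0 \<le> r" "r \<le> q"
  have "cut q (ennreal r) = r" unfolding cut_def using r q
    by (simp add: min_def ennreal_le_iff)
  moreover have "gg (ennreal q) \<le> gg (ennreal r)" using r by (intro gg_mono) (simp add: ennreal_leI)
  moreover have "0 \<le> K * (gg (ennreal r) - gg (ennreal q))"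
    using K \<open>gg (ennreal q) \<le> gg (ennreal r)\<close> by simp
  ultimately have "r - q \<le> K * (gg (ennreal r) - gg (ennreal q))" "cut q (ennreal r) = r"
    using r by linarith+
  then show ?thesis unfolding vv_def by (simp add: min_def)
qed

lemma vv_right: "0 \<le> q \<Longrightarrow> 0 < K \<Longrightarrow> ennreal q \<le> x \<Longrightarrow> vv q K x = K * (gg x - gg (ennreal q))"
proof -
  assume q: "0 \<le> q" and K: "0 < K" and x: "ennreal q \<le> x"
  have "cut q x = q" unfolding cut_def using x q by (simp add: min_def)
  moreover have "gg x \<le> gg (ennreal q)" using x by (intro gg_mono)
  moreover have "K * (gg x - gg (ennreal q)) \<le> 0"
    using K \<open>gg x \<le> gg (ennreal q)\<close> by (simp add: mult_nonneg_nonpos)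
  ultimately show ?thesis unfolding vv_def using K
    by (simp add: min_def)
qed

lemma vv_at: "0 \<le> q \<Longrightarrow> 0 < K \<Longrightarrow> vv q K (ennreal q) = 0"
  using vv_left[of q K q] by simp

lemma vv_neg: assumes q: "0 \<le> q" and K: "0 < K" and x: "x \<noteq> ennreal q"
  shows "vv q K x < 0"
proof (cases "x \<le> ennreal q")
  case True
  have "x < top" using True ennreal_less_top[of q] by (rule le_less_trans)
  then obtain r where r: "x = ennreal r" "0 \<le> r" by (cases x) auto
  have "ennreal r \<le> ennreal q" using True r(1) by simp
  then have "r \<le> q" using q by (simp only: ennreal_le_iff)
  moreover have "r \<noteq> q" using x r by auto
  ultimately have "r < q" by simp
  then show ?thesis using vv_left[OF q K r(2)] r(1) by simp
next
  case False
  then have "ennreal q < x" by simp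
  then have "gg x < gg (ennreal q)" by (rule gg_strict)
  then have "K * (gg x - gg (ennreal q)) < 0" using K by (simp add: mult_pos_neg)
  then show ?thesis using vv_right[OF q K] \<open>ennreal q < x\<close> by simp
qed

definition spp :: "real \<Rightarrow> real \<Rightarrow> pref" where
  "spp q K = (\<lambda>x y. vv q K y \<le> vv q K x)"

lemma spp_U: "spp q K \<in> U_dom"
  unfolding U_dom_def complete_preorder_def continuous_pref_def spp_def
proof (intro CollectI conjI allI)
  fix x
  show "closed {y. vv q K x \<le> vv q K y}"
    by (rule closed_Collect_le) (auto intro: vv_cont continuous_on_const)
  show "closed {y. vv q K y \<le> vv q K x}"
    by (rule closed_Collect_le) (auto intro: vv_cont continuous_on_const)
qed auto

lemma peak_spp: "0 \<le> q \<Longrightarrow> 0 < K \<Longrightarrow> peak (spp q K) = {ennreal q}"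
  unfolding peak_def spp_def
proof (intro set_eqI iffI)
  fix x
  assume q: "0 \<le> q" and K: "0 < K"
  { assume "x \<in> {x. \<forall>y. vv q K y \<le> vv q K x}"
    then have "vv q K (ennreal q) \<le> vv q K x" by auto
    then show "x \<in> {ennreal q}" using vv_at[OF q K] vv_neg[OF q K, of x] by fastforce }
  { assume "x \<in> {ennreal q}"
    then have "\<forall>y. vv q K y \<le> vv q K x"
      using vv_at[OF q K] vv_neg[OF q K] by (metis less_imp_le order_refl singletonD)
    then show "x \<in> {x. \<forall>y. vv q K y \<le> vv q K x}" by simp }
qed

lemma spp_SP: assumes q: "0 \<le> q" and K: "0 < K" shows "spp q K \<in> SP_dom"
  unfolding SP_dom_def
proof (intro CollectI conjI exI[of _ "ennreal q"] allI impI)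
  show "spp q K \<in> U_dom" by (rule spp_U)
  show "peak (spp q K) = {ennreal q}" using q K by (rule peak_spp)
  fix x x' :: ennreal
  assume h: "x \<noteq> \<infinity> \<and> x' \<noteq> \<infinity> \<and> (x' < x \<and> x \<le> ennreal q \<or> ennreal q \<le> x \<and> x < x')"
  have "x \<noteq> top" "x' \<noteq> top" using h by auto
  then obtain r r' where r: "x = ennreal r" "0 \<le> r" and r': "x' = ennreal r'" "0 \<le> r'"
    by (cases x; cases x') auto
  have "vv q K x' < vv q K x"
  proof (cases "x' < x \<and> x \<le> ennreal q")
    case True
    then have "r' < r" "r \<le> q" using r r' q by (auto simp: ennreal_less_iff ennreal_le_iff)
    then show ?thesis using r r' vv_left[OF q K] by simp
  next
    case False
    then have "ennreal q \<le> x" "x < x'" using h by auto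
    then show ?thesis using vv_right[OF q K] gg_strict[of x x'] K by simp
  qed
  then show "strict (spp q K) x x'" unfolding strict_def spp_def by simp
qed


lemma finite_max:
  assumes cp: "complete_preorder R" and fin: "finite X"
  shows "\<exists>m. \<forall>x\<in>X. R m x"
  using fin
proof (induction X rule: finite_induct)
  case empty
  then show ?case by simp
next
  case (insert x X)
  then obtain m where m: "\<forall>z\<in>X. R m z" by blast
  show ?case
  proof (cases "R m x")
    case True
    then show ?thesis using m by blast
  next
    case False
    then have "R x m" using cp unfolding complete_preorder_def by blast
    then have "\<forall>z\<in>insert x X. R x z" using m cp unfolding complete_preorder_def by blast
    then show ?thesis by blast
  qed
qed

lemma closed_up: "R \<in> U_dom \<Longrightarrow> closed {y. R y x}"
  unfolding U_dom_def continuous_pref_def by auto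

lemma closed_down: "R \<in> U_dom \<Longrightarrow> closed {y. R x y}"
  unfolding U_dom_def continuous_pref_def by auto

lemma open_notdown: "R \<in> U_dom \<Longrightarrow> open {y. \<not> R x y}"
proof -
  assume "R \<in> U_dom"
  then have "open (- {y. R x y})" using closed_down by (simp add: open_Compl)
  moreover have "- {y. R x y} = {y. \<not> R x y}" by auto
  ultimately show ?thesis by simp
qed

lemma U_cp: "R \<in> U_dom \<Longrightarrow> complete_preorder R"
  unfolding U_dom_def by auto

lemma peak_eq: "peak R = (\<Inter>x\<in>UNIV. {y. R y x})"
  unfolding peak_def by auto

lemma peak_closed: "R \<in> U_dom \<Longrightarrow> closed (peak R)"
  unfolding peak_eq using closed_up by (intro closed_INT) auto

lemma peak_ne: assumes U: "R \<in> U_dom" shows "peak R \<noteq> {}"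
proof -
  have "UNIV \<inter> (\<Inter>x\<in>UNIV. {y. R y x}) \<noteq> {}"
  proof (rule compact_imp_fip_image[OF compact_UNIV])
    show "\<And>x. x \<in> UNIV \<Longrightarrow> closed {y. R y x}" using closed_up[OF U] by auto
    fix I' :: "ennreal set"
    assume "finite I'" "I' \<subseteq> UNIV"
    then obtain m where "\<forall>x\<in>I'. R m x" using finite_max[OF U_cp[OF U]] by blast
    then have "m \<in> UNIV \<inter> (\<Inter>x\<in>I'. {y. R y x})" by auto
    then show "UNIV \<inter> (\<Inter>x\<in>I'. {y. R y x}) \<noteq> {}" by blast
  qed
  then show ?thesis unfolding peak_eq by simp
qed

lemma sum_split:
  fixes f :: "nat \<Rightarrow> real"
  assumes i: "i < n" and j: "j < n" and ij: "i \<noteq> j" and c: "\<And>k. k < n \<Longrightarrow> k \<noteq> i \<Longrightarrow> k \<noteq> j \<Longrightarrow> f k = c"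
  shows "(\<Sum>k<n. f k) = f i + f j + (real n - 2) * c"
proof -
  have 1: "(\<Sum>k<n. f k) = f i + sum f ({..<n} - {i})"
    using i by (simp add: sum.remove)
  have 2: "sum f ({..<n} - {i}) = f j + sum f ({..<n} - {i} - {j})"
    using j ij by (subst sum.remove[of _ j]) auto
  have 3: "sum f ({..<n} - {i} - {j}) = sum (\<lambda>_. c) ({..<n} - {i} - {j})"
    by (rule sum.cong) (auto intro: c)
  have 4: "card ({..<n} - {i} - {j}) = n - 2"
    using i j ij by (simp add: card_Diff_singleton_if)
  have 5: "real (n - 2) = real n - 2" using i j ij by (simp add: of_nat_diff)
  show ?thesis using 1 2 3 4 5 by simp
qed

context
  fixes D :: "pref set" and n :: nat and \<phi> :: rule
  assumes n2: "2 \<le> n" and SPD: "SP_dom \<subseteq> D" and DU: "D \<subseteq> U_dom"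
    and rule: "is_rule D n \<phi>" and opo: "own_peak_only D n \<phi>" and eff: "efficient D n \<phi>"
    and edg: "equal_division_guarantee D n \<phi>" and nom: "NOM D n \<phi>"
begin

lemma spp_D: "0 \<le> q \<Longrightarrow> 0 < K \<Longrightarrow> spp q K \<in> D"
  using spp_SP SPD by blast

lemma prof_in: "R \<in> profiles D n \<Longrightarrow> k < n \<Longrightarrow> R k \<in> D"
  unfolding profiles_def by (auto simp: PiE_iff)

lemma prof_upd: "R \<in> profiles D n \<Longrightarrow> k < n \<Longrightarrow> R' \<in> D \<Longrightarrow> R(k := R') \<in> profiles D n"
  unfolding profiles_def by (auto simp: PiE_iff extensional_def)

lemma D_cp: "R \<in> D \<Longrightarrow> complete_preorder R"
  using DU U_cp by blast

lemma phi_nonneg: "R \<in> profiles D n \<Longrightarrow> 0 < \<Omega> \<Longrightarrow> k < n \<Longrightarrow> 0 \<le> \<phi> R \<Omega> k"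
  using rule unfolding is_rule_def by blast

lemma phi_sum: "R \<in> profiles D n \<Longrightarrow> 0 < \<Omega> \<Longrightarrow> (\<Sum>k<n. \<phi> R \<Omega> k) = \<Omega>"
  using rule unfolding is_rule_def by blast

lemma spp_eq: assumes q: "0 \<le> q" and K: "0 < K" and a: "0 \<le> a"
  and h: "spp q K (ennreal a) (ennreal q)" shows "a = q"
proof -
  have "vv q K (ennreal q) \<le> vv q K (ennreal a)" using h unfolding spp_def by simp
  then have "ennreal a = ennreal q" using vv_at[OF q K] vv_neg[OF q K, of "ennreal a"] by fastforce
  then show ?thesis using a q by simp
qed

lemma edg_spp:
  assumes R: "R \<in> profiles D n" and \<Omega>: "0 < \<Omega>" and k: "k < n"
    and Rk: "R k = spp (\<Omega> / real n) K" and K: "0 < K"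
  shows "\<phi> R \<Omega> k = \<Omega> / real n"
proof -
  have q: "0 \<le> \<Omega> / real n" using \<Omega> by simp
  have "ennreal (\<Omega> / real n) \<in> peak (R k)" using Rk peak_spp[OF q K] by simp
  then have "indiff (R k) (ennreal (\<phi> R \<Omega> k)) (ennreal (\<Omega> / real n))"
    using edg R \<Omega> k unfolding equal_division_guarantee_def by blast
  then have "spp (\<Omega> / real n) K (ennreal (\<phi> R \<Omega> k)) (ennreal (\<Omega> / real n))"
    using Rk unfolding indiff_def by simp
  then show ?thesis using spp_eq[OF q K phi_nonneg[OF R \<Omega> k]] by simp
qed

lemma guarantee:
  assumes R: "R \<in> profiles D n" and \<Omega>: "0 < \<Omega>" and k: "k < n"
  shows "R k (ennreal (\<phi> R \<Omega> k)) (ennreal (\<Omega> / real n))"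
proof (rule ccontr)
  assume nR: "\<not> R k (ennreal (\<phi> R \<Omega> k)) (ennreal (\<Omega> / real n))"
  define R' where "R' = spp (\<Omega> / real n) 1"
  have q: "0 \<le> \<Omega> / real n" using \<Omega> by simp
  have R'D: "R' \<in> D" unfolding R'_def using spp_D[OF q] by simp
  have RkD: "R k \<in> D" using prof_in[OF R k] .
  have cpk: "complete_preorder (R k)" using D_cp[OF RkD] .
  have opt: "x' = \<Omega> / real n" if x'in: "x' \<in> option_set D n \<phi> k R' \<Omega>" for x'
  proof -
    obtain R0 where R0: "R0 \<in> profiles D n" "R0 k = R'" "x' = \<phi> R0 \<Omega> k"
      using x'in unfolding option_set_def by blast
    show ?thesis using edg_spp[OF R0(1) \<Omega> k _ zero_less_one] R0(2,3) unfolding R'_def by simp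
  qed
  have upd: "\<phi> (R(k := R')) \<Omega> k = \<Omega> / real n"
    using edg_spp[OF prof_upd[OF R k R'D] \<Omega> k _ zero_less_one] unfolding R'_def by simp
  have st: "strict (R k) (ennreal (\<Omega> / real n)) (ennreal (\<phi> R \<Omega> k))"
    using nR cpk unfolding strict_def complete_preorder_def by blast
  have mem: "\<phi> R \<Omega> k \<in> option_set D n \<phi> k (R k) \<Omega>"
    unfolding option_set_def using R by blast
  have "obvious_manipulation D n \<phi> k (R k) \<Omega> R'"
    unfolding obvious_manipulation_def manipulation_def
  proof (intro conjI ballI)
    show "R' \<in> D" by (rule R'D)
    show "\<exists>R0\<in>profiles D n. R0 k = R k \<and>
        strict (R k) (ennreal (\<phi> (R0(k := R')) \<Omega> k)) (ennreal (\<phi> R0 \<Omega> k))"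
      using R upd st by auto
    fix x' assume "x' \<in> option_set D n \<phi> k R' \<Omega>"
    then have "x' = \<Omega> / real n" by (rule opt)
    then show "\<exists>x\<in>option_set D n \<phi> k (R k) \<Omega>. strict (R k) (ennreal x') (ennreal x)"
      using mem st by blast
  qed
  then show False using nom k RkD \<Omega> unfolding NOM_def by blast
qed

lemma key:
  assumes i: "i < n" and RiD: "Ri \<in> D" and b: "0 \<le> b" "b < w" and wt: "w < t"
    and nwt: "\<not> Ri (ennreal w) (ennreal t)"
    and bR: "\<And>a. w \<le> a \<Longrightarrow> a \<le> t \<Longrightarrow> Ri (ennreal b) (ennreal a)"
  shows False
proof -
  define j where "j = (if i = 0 then 1 else 0::nat)"
  have j: "j < n" "j \<noteq> i" using n2 i by (auto simp: j_def)
  have t0: "0 < t" using b wt by linarith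
  define \<Omega> where "\<Omega> = real n * t"
  have \<Omega>0: "0 < \<Omega>" using n2 t0 by (simp add: \<Omega>_def)
  have \<Omega>n: "\<Omega> / real n = t" using n2 by (simp add: \<Omega>_def)
  define q where "q = 2*t - w"
  have qt: "t < q" "0 \<le> q" using wt t0 by (auto simp: q_def)
  define prof where "prof K = (\<lambda>k. if k < n then (if k = i then Ri else if k = j then spp q K else spp t 1) else undefined)" for K
  have profD: "prof K \<in> profiles D n" if K: "0 < K" for K
    unfolding profiles_def prof_def using RiD spp_D[OF qt(2) K] spp_D[of t 1] t0
    by (auto simp: PiE_iff extensional_def)
  have others: "\<phi> (prof K) \<Omega> k = t" if K: "0 < K" and k: "k < n" "k \<noteq> i" "k \<noteq> j" for K k
  proof -
    have "prof K k = spp (\<Omega> / real n) 1" using k \<Omega>n by (simp add: prof_def)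
    then show ?thesis using edg_spp[OF profD[OF K] \<Omega>0 k(1) _ zero_less_one] \<Omega>n by simp
  qed
  define sj where "sj = \<phi> (prof 1) \<Omega> j"
  have sjK: "\<phi> (prof K) \<Omega> j = sj" if K: "0 < K" for K
  proof -
    have e: "prof K = (prof 1)(j := spp q K)" by (rule ext) (auto simp: prof_def j)
    have pk: "peak (spp q K) = peak (prof 1 j)" using j qt K by (simp add: prof_def peak_spp)
    have "\<phi> (prof 1) \<Omega> j = \<phi> ((prof 1)(j := spp q K)) \<Omega> j"
      using opo profD[of 1] \<Omega>0 j(1) spp_D[OF qt(2) K] pk unfolding own_peak_only_def by simp
    then show ?thesis using e sj_def by simp
  qed
  have aK: "\<phi> (prof K) \<Omega> i = 2*t - sj" if K: "0 < K" for K
  proof -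
    have "(\<Sum>k<n. \<phi> (prof K) \<Omega> k) = \<phi> (prof K) \<Omega> i + \<phi> (prof K) \<Omega> j + (real n - 2) * t"
      by (rule sum_split[OF i j(1) j(2)[symmetric]]) (use others[OF K] in auto)
    then show ?thesis using phi_sum[OF profD[OF K] \<Omega>0] sjK[OF K] \<Omega>_def
      by (simp add: algebra_simps)
  qed
  define a where "a = 2*t - sj"
  have sj0: "0 \<le> sj" unfolding sj_def using phi_nonneg[OF profD[of 1] \<Omega>0 j(1)] by simp
  have gj: "spp q K (ennreal sj) (ennreal t)" if K: "0 < K" for K
    using guarantee[OF profD[OF K] \<Omega>0 j(1)] sjK[OF K] \<Omega>n j by (simp add: prof_def)
  have sjt: "t \<le> sj"
  proof (rule ccontr)
    assume "\<not> t \<le> sj"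
    then have "sj < t" by simp
    then have "vv q 1 (ennreal sj) < vv q 1 (ennreal t)"
      using vv_left[OF qt(2) zero_less_one] sj0 t0 qt by simp
    then show False using gj[OF zero_less_one] unfolding spp_def by simp
  qed
  have sjq: "sj \<le> q"
  proof (rule ccontr)
    assume "\<not> sj \<le> q"
    then have qs: "q < sj" by simp
    have gs: "gg (ennreal sj) < gg (ennreal q)" using qs qt by (intro gg_strict) (simp add: ennreal_less_iff)
    define K where "K = (q - t + 1) / (gg (ennreal q) - gg (ennreal sj))"
    have K: "0 < K" unfolding K_def using gs qt by simp
    have "vv q K (ennreal sj) = K * (gg (ennreal sj) - gg (ennreal q))"
      using vv_right[OF qt(2) K] qs qt by (simp add: ennreal_le_iff)
    also have "\<dots> = - (q - t + 1)" unfolding K_def using gs by (simp add: field_simps)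
    finally have 1: "vv q K (ennreal sj) = - (q - t + 1)" .
    have 2: "vv q K (ennreal t) = t - q" using vv_left[OF qt(2) K] t0 qt by simp
    show False using gj[OF K] 1 2 unfolding spp_def by simp
  qed
  have ga: "Ri (ennreal a) (ennreal t)"
    using guarantee[OF profD[of 1] \<Omega>0 i] aK[of 1] \<Omega>n unfolding a_def by (simp add: prof_def i)
  have aw: "w \<le> a" "a \<le> t" using sjt sjq unfolding a_def q_def by simp_all
  have "a \<noteq> w" using nwt ga by auto
  then have sjq': "sj < q" using sjq unfolding a_def q_def by auto
  define y where "y = 2*t - b"
  have yq: "q < y" using b unfolding y_def q_def by simp
  have gy: "gg (ennreal y) < gg (ennreal q)" using yq qt by (intro gg_strict) (simp add: ennreal_less_iff)
  define K where "K = (q - sj) / (2 * (gg (ennreal q) - gg (ennreal y)))"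
  have K: "0 < K" unfolding K_def using gy sjq' by simp
  have "vv q K (ennreal y) = K * (gg (ennreal y) - gg (ennreal q))"
    using vv_right[OF qt(2) K] yq qt by (simp add: ennreal_le_iff)
  also have "\<dots> = - (q - sj) / 2" unfolding K_def using gy by (simp add: field_simps)
  finally have vy: "vv q K (ennreal y) = - (q - sj) / 2" .
  have vs: "vv q K (ennreal sj) = sj - q" using vv_left[OF qt(2) K] sj0 sjq by simp
  define x where "x = (\<lambda>k. if k = i then b else if k = j then y else t)"
  have x0: "\<forall>k<n. 0 \<le> x k" unfolding x_def using b yq qt t0 by auto
  have xs: "(\<Sum>k<n. x k) = \<Omega>"
  proof -
    have "(\<Sum>k<n. x k) = x i + x j + (real n - 2) * t"
      by (rule sum_split[OF i j(1) j(2)[symmetric]]) (auto simp: x_def)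
    then show ?thesis unfolding x_def y_def \<Omega>_def using j by (simp add: algebra_simps)
  qed
  have xR: "\<forall>k<n. prof K k (ennreal (x k)) (ennreal (\<phi> (prof K) \<Omega> k))"
  proof (intro allI impI)
    fix k assume k: "k < n"
    show "prof K k (ennreal (x k)) (ennreal (\<phi> (prof K) \<Omega> k))"
    proof (cases "k = i")
      case True
      then show ?thesis using bR[OF aw] aK[OF K] k unfolding x_def a_def prof_def by simp
    next
      case False
      show ?thesis
      proof (cases "k = j")
        case True
        then show ?thesis using sjK[OF K] k False vy vs sjq' unfolding x_def prof_def spp_def by simp
      next
        case False2: False
        then show ?thesis using others[OF K k False False2] k False unfolding x_def prof_def spp_def by simp
      qed
    qed
  qed
  have xS: "\<exists>k<n. strict (prof K k) (ennreal (x k)) (ennreal (\<phi> (prof K) \<Omega> k))"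
  proof (intro exI conjI)
    show "j < n" by (rule j(1))
    show "strict (prof K j) (ennreal (x j)) (ennreal (\<phi> (prof K) \<Omega> j))"
      using sjK[OF K] j vy vs sjq' unfolding x_def prof_def spp_def strict_def by simp
  qed
  show False using eff profD[OF K] \<Omega>0 x0 xs xR xS unfolding efficient_def by blast
qed

lemma in_C: assumes RD: "R \<in> D" shows "R \<in> C_dom"
proof (rule ccontr)
  assume nC: "R \<notin> C_dom"
  have U: "R \<in> U_dom" using RD DU by blast
  have cp: "complete_preorder R" using U_cp[OF U] .
  have refl: "\<And>x. R x x" and trans: "\<And>x y z. R x y \<Longrightarrow> R y z \<Longrightarrow> R x z"
    and tot: "\<And>x y. R x y \<or> R y x" using cp unfolding complete_preorder_def by blast+
  define P where "P = peak R"
  have Pne: "P \<noteq> {}" unfolding P_def by (rule peak_ne[OF U])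
  have Pcl: "closed P" unfolding P_def by (rule peak_closed[OF U])
  define lo where "lo = Inf P"
  define hi where "hi = Sup P"
  have loP: "lo \<in> P" unfolding lo_def by (rule closed_contains_Inf_cl[OF Pcl Pne])
  have hiP: "hi \<in> P" unfolding hi_def by (rule closed_contains_Sup_cl[OF Pcl Pne])
  have inP: "\<And>p y. p \<in> P \<Longrightarrow> R p y" unfolding P_def peak_def by blast
  have i0: "0 < n" using n2 by simp
  from nC U consider (F3) "P \<noteq> {lo..hi}"
    | (F12) x x' where "x \<noteq> \<infinity>" "x' \<noteq> \<infinity>" "(x' < x \<and> x \<le> lo) \<or> (hi \<le> x \<and> x < x')" "\<not> R x x'"
    unfolding C_dom_def P_def lo_def hi_def by blast
  then show False
  proof cases
    case F3
    have "P \<subseteq> {lo..hi}" unfolding lo_def hi_def by (auto intro: Inf_lower Sup_upper)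
    then have "\<not> {lo..hi} \<subseteq> P" using F3 by (metis subset_antisym)
    then obtain y where "y \<in> {lo..hi}" "y \<notin> P" unfolding subset_iff by metis
    then have y: "lo \<le> y" "y \<le> hi" "y \<notin> P" by auto
    have ly: "lo < y" using y loP by (auto simp: order_le_less)
    have yh: "y < hi" using y hiP by (auto simp: order_le_less)
    have nyh: "\<not> R y hi"
    proof
      assume "R y hi"
      then have "\<forall>z. R y z" using inP[OF hiP] trans by metis
      then show False using y(3) unfolding P_def peak_def by blast
    qed
    have opn: "open {z. \<not> R y z}" by (rule open_notdown[OF U])
    obtain c where c: "c < hi" "{c<..hi} \<subseteq> {z. \<not> R y z}"
      using open_left[OF opn _ yh] nyh by blast
    have "y < top" using yh top_greatest by (rule less_le_trans)
    then obtain ry where ry: "y = ennreal ry" "0 \<le> ry" by (cases y) auto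
    have "lo < top" using ly \<open>y < top\<close> by (rule less_trans)
    then obtain rl where rl: "lo = ennreal rl" "0 \<le> rl" by (cases lo) auto
    obtain rt where rt: "ry < rt" "\<not> R y (ennreal rt)"
    proof (cases "hi = top")
      case True
      have "c < top" using c True by simp
      then obtain rc where rc: "c = ennreal rc" "0 \<le> rc" by (cases c) auto
      define rt where "rt = max rc ry + 1"
      have "rc < rt" "0 < rt" using rc ry unfolding rt_def by auto
      then have "ennreal rc < ennreal rt" by (intro ennreal_lessI)
      then have "c < ennreal rt" using rc by simp
      moreover have "ennreal rt \<le> hi" using True by simp
      ultimately have "\<not> R y (ennreal rt)" using c by auto
      moreover have "ry < rt" unfolding rt_def by simp
      ultimately show ?thesis using that by blast
    next
      case False
      then obtain rh where rh: "hi = ennreal rh" "0 \<le> rh" by (cases hi) auto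
      have "ry < rh" using yh ry rh by (simp add: ennreal_less_iff)
      then show ?thesis using that nyh rh by blast
    qed
    have "rl < ry" using ly rl ry by (simp add: ennreal_less_iff)
    show False
    proof (rule key[OF i0 RD rl(2) \<open>rl < ry\<close> rt(1)])
      show "\<not> R (ennreal ry) (ennreal rt)" using rt ry by simp
      show "\<And>a. ry \<le> a \<Longrightarrow> a \<le> rt \<Longrightarrow> R (ennreal rl) (ennreal a)"
        using inP[OF loP] rl by simp
    qed
  next
    case F12
    then have "x < top" "x' < top" by (simp_all add: top.not_eq_extremum)
    then obtain rx rx' where rx: "x = ennreal rx" "0 \<le> rx" and rx': "x' = ennreal rx'" "0 \<le> rx'"
      by (cases x; cases x') auto
    consider (F1) "x' < x" "x \<le> lo" | (F2) "hi \<le> x" "x < x'" using F12 by blast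
    then show False
    proof cases
      case F2
      have "hi \<noteq> x" using inP[OF hiP] F12(4) by blast
      then have hx: "hi < x" using F2 by simp
      have "hi < top" using hx \<open>x < top\<close> by simp
      then obtain rh where rh: "hi = ennreal rh" "0 \<le> rh" by (cases hi) auto
      show False
      proof (rule key[OF i0 RD rh(2)])
        show "rh < rx" using hx rh rx by (simp add: ennreal_less_iff)
        show "rx < rx'" using F2 rx rx' by (simp add: ennreal_less_iff)
        show "\<not> R (ennreal rx) (ennreal rx')" using F12(4) rx rx' by simp
        show "\<And>a. rx \<le> a \<Longrightarrow> a \<le> rx' \<Longrightarrow> R (ennreal rh) (ennreal a)"
          using inP[OF hiP] rh by simp
      qed
    next
      case F1
      define S where "S = {z. x \<le> z \<and> R z x'}"
      have loS: "lo \<in> S" unfolding S_def using F1 inP[OF loP] by simp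
      have Scl: "closed S"
      proof -
        have "S = {x..} \<inter> {z. R z x'}" unfolding S_def by auto
        then show ?thesis using closed_up[OF U] by (simp add: closed_Int closed_atLeast)
      qed
      define s where "s = Inf S"
      have sS: "s \<in> S" unfolding s_def by (rule closed_contains_Inf_cl[OF Scl]) (use loS in auto)
      have xs: "x \<le> s" "R s x'" using sS unfolding S_def by auto
      have "s \<noteq> x" using xs F12(4) by auto
      then have xs': "x < s" using xs by simp
      have below: "R x' z" if "x \<le> z" "z < s" for z
      proof -
        have "z \<notin> S"
        proof
          assume "z \<in> S"
          then have "s \<le> z" unfolding s_def by (rule Inf_lower)
          then show False using that by simp
        qed
        then have "\<not> R z x'" using that unfolding S_def by simp
        then show ?thesis using tot by blast
      qed
      have x's: "R x' s"
      proof (rule ccontr)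
        assume ns: "\<not> R x' s"
        have opn: "open {z. \<not> R x' z}" by (rule open_notdown[OF U])
        obtain c where c: "c < s" "{c<..s} \<subseteq> {z. \<not> R x' z}"
          using open_left[OF opn _ xs'] ns by blast
        have "max c x < s" using c xs' by simp
        then obtain z where z: "max c x < z" "z < s" using dense by blast
        then have "z \<in> {c<..s}" by simp
        then have "\<not> R x' z" using c by blast
        moreover have "x < z" using z(1) by simp
        then have "x \<le> z" by (rule less_imp_le)
        then have "R x' z" using below[of z] z by simp
        ultimately show False by simp
      qed
      have stop: "s \<noteq> top"
      proof
        assume st: "s = top"
        have "s \<le> lo" unfolding s_def using loS by (rule Inf_lower)
        then have "lo = top" using st by (simp add: top_unique)
        then have "R x' lo" using x's st by simp
        then have "\<forall>z. R x' z" using inP[OF loP] trans by blast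
        then have "x' \<in> P" unfolding P_def peak_def by blast
        then have "lo \<le> x'" unfolding lo_def by (rule Inf_lower)
        then show False using F1 by simp
      qed
      then obtain rs where rs: "s = ennreal rs" "0 \<le> rs" by (cases s) auto
      show False
      proof (rule key[OF i0 RD rx'(2)])
        show "rx' < rx" using F1 rx rx' by (simp add: ennreal_less_iff)
        show "rx < rs" using xs' rx rs by (simp add: ennreal_less_iff)
        show "\<not> R (ennreal rx) (ennreal rs)"
        proof
          assume "R (ennreal rx) (ennreal rs)"
          then have "R x x'" using trans xs(2) rx rs by blast
          then show False using F12(4) by simp
        qed
        fix a assume a: "rx \<le> a" "a \<le> rs"
        show "R (ennreal rx') (ennreal a)"
        proof (cases "a = rs")
          case True
          then show ?thesis using x's rx' rs by simp
        next
          case False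
          then have "a < rs" using a by simp
          then have "ennreal a < s" using rs rx a by (simp add: ennreal_less_iff)
          moreover have "x \<le> ennreal a" using a rx by (simp add: ennreal_leI)
          ultimately show ?thesis using below rx' by simp
        qed
      qed
    qed
  qed
qed

end

theorem lemma4:
  fixes D :: "pref set" and n :: nat
  assumes "2 \<le> n"
    and "SP_dom \<subseteq> D" and "D \<subseteq> U_dom"
    and "\<exists>\<phi>. is_rule D n \<phi> \<and> own_peak_only D n \<phi> \<and> efficient D n \<phi>
              \<and> equal_division_guarantee D n \<phi> \<and> NOM D n \<phi>"
  shows "D \<subseteq> C_dom"
proof -
  obtain \<phi> where "is_rule D n \<phi>" "own_peak_only D n \<phi>" "efficient D n \<phi>"
    "equal_division_guarantee D n \<phi>" "NOM D n \<phi>" using assms(4) by blast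
  then show ?thesis using in_C[OF assms(1-3)] by blast
qed

end
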